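(* Let $a,b,c\in\mathbb{R}\setminus\{0\}$ with $b^2-4ac>0$, and let $\{P_m(z)\}_{m\geq 0}$ be the sequence of functions of $z$ generated by \[ \sum_{m=0}^\infty P_m(z)\, t^m=\frac{1}{(at^2+bt+c)(1-tz)}. \] Let $\alpha,\beta$ be the zeros of $at^2+bt+c$ with $|\alpha|\leq|\beta|$. Then there exists $N\in\mathbb{N}$ such that for all $m>N$, \[ \mathcal{Z}(P_m)\cap B\!\left(\tfrac12\left(\tfrac{1}{|\alpha|}+\tfrac{1}{|\beta|}\right),0\right)=\emptyset . \]
   Context: A sequence $\{P_m(z)\}$ is generated by $f(t,z)$ if, for each $z\in\mathbb{C}$, $f(t,z)$ is analytic in $t$ in a neighborhood of $t=0$ and $P_m(z)$ is the coefficient of $t^m$ in the power series expansion of $f(t,z)$ in $t$ about $0$. $\mathcal{Z}(P_m)$ is the set of zeros of $P_m$ in $\mathbb{C}$, and $B(R,0)$ is the open disk of radius $R$ centered at $0$. *)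

theory Defs
  imports "HOL-Complex_Analysis.Complex_Analysis"
begin

definition genP :: "real \<Rightarrow> real \<Rightarrow> real \<Rightarrow> nat \<Rightarrow> complex \<Rightarrow> complex" where
  "genP a b c m z =
     fps_nth (fps_expansion (\<lambda>t. 1 / ((complex_of_real a * t\<^sup>2 + complex_of_real b * t
                                        + complex_of_real c) * (1 - t * z))) 0) m"

end

theory Submission
  imports Defs
begin

lemma geo_fps: "inverse (1 - fps_const (w::complex) * fps_X) = Abs_fps (\<lambda>n. w^n)"
proof (rule fps_inverse_unique)
  show "(1 - fps_const w * fps_X) * Abs_fps (\<lambda>n. w^n) = 1"
  proof (subst fps_eq_iff, intro allI)
    fix n show "fps_nth ((1 - fps_const w * fps_X) * Abs_fps (\<lambda>n. w^n)) n = fps_nth 1 n"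
      by (cases n) (simp_all add: algebra_simps)
  qed
qed

lemma geo_exp: "(\<lambda>t::complex. inverse (1 - w * t)) has_fps_expansion Abs_fps (\<lambda>n. w^n)"
proof -
  have "(\<lambda>t::complex. inverse (1 - w * t)) has_fps_expansion inverse (1 - fps_const w * fps_X)"
    by (intro fps_expansion_intros) auto
  thus ?thesis by (simp add: geo_fps)
qed

lemma genP_formula:
  fixes a b c \<alpha> \<beta> :: real
  assumes "a \<noteq> 0" "\<alpha> \<noteq> 0" "\<beta> \<noteq> 0" "\<alpha> \<noteq> \<beta>"
    and "a * \<alpha>\<^sup>2 + b * \<alpha> + c = 0" and "a * \<beta>\<^sup>2 + b * \<beta> + c = 0"
  shows "genP a b c m z = (1 / (of_real a * (of_real \<alpha> - of_real \<beta>))) *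
     (\<Sum>i\<le>m. ((of_real (1/\<beta>))^(Suc i) - (of_real (1/\<alpha>))^(Suc i)) * z^(m-i))"
proof -
  define A B :: complex where "A = of_real \<alpha>" "B = of_real \<beta>"
  define u v :: complex where "u = of_real (1/\<alpha>)" "v = of_real (1/\<beta>)"
  define K :: complex where "K = 1 / (of_real a * (A - B))"
  have sum: "\<alpha> + \<beta> = - b / a"
  proof -
    have "(\<alpha> - \<beta>) * (a * (\<alpha> + \<beta>) + b) = 0" using assms(5,6) by (simp add: algebra_simps power2_eq_square)
    hence "a * (\<alpha> + \<beta>) + b = 0" using assms(4) by simp
    thus ?thesis using assms(1) by (simp add: field_simps)
  qed
  have prod: "c = a * \<alpha> * \<beta>"
    using assms(1,5) sum by (simp add: field_simps power2_eq_square) (smt (verit) distrib_left mult.assoc)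
  have fac: "of_real a * t\<^sup>2 + of_real b * t + of_real c = of_real a * (t - A) * (t - B)" for t :: complex
  proof -
    have "b = - a * (\<alpha> + \<beta>)" using sum assms(1) by (simp add: field_simps)
    hence "complex_of_real b = - of_real a * (A + B)" unfolding A_B_def by simp
    moreover have "complex_of_real c = of_real a * A * B" unfolding A_B_def prod by simp
    ultimately show ?thesis by (simp only:) (simp add: algebra_simps power2_eq_square)
  qed
  define g where "g t = K * ((v * inverse (1 - v * t) - u * inverse (1 - u * t)) * inverse (1 - z * t))" for t
  define f where "f t = 1 / ((of_real a * t\<^sup>2 + of_real b * t + of_real c) * (1 - t * z))" for t :: complex
  define E where "E = fps_const K * ((fps_const v * Abs_fps (\<lambda>n. v^n) - fps_const u * Abs_fps (\<lambda>n. u^n)) * Abs_fps (\<lambda>n. z^n))"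
  have gE: "g has_fps_expansion E"
    unfolding g_def E_def by (intro fps_expansion_intros geo_exp)
  have ev1: "eventually (\<lambda>t. t \<noteq> A) (nhds 0)" "eventually (\<lambda>t. t \<noteq> B) (nhds 0)"
    using assms(2,3) unfolding A_B_def by (auto intro!: t1_space_nhds)
  have ev2: "eventually (\<lambda>t. 1 - z * t \<noteq> 0) (nhds 0)"
  proof -
    have "eventually (\<lambda>t. t \<in> ball 0 (1/(norm z+1))) (nhds 0)"
      by (intro eventually_nhds_in_open) (auto simp: add_nonneg_pos)
    thus ?thesis
    proof eventually_elim
      case (elim t)
      hence "norm t < 1 / (norm z + 1)" by simp
      hence "norm t * (norm z + 1) < 1"
        using pos_less_divide_eq[of "norm z + 1" "norm t" 1] by (simp add: add_nonneg_pos)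
      hence "norm (z * t) < 1" by (simp add: norm_mult algebra_simps) (smt (verit) mult_nonneg_nonneg norm_ge_zero)
      thus ?case by auto
    qed
  qed
  have "eventually (\<lambda>t. f t = g t) (nhds 0)"
    using ev1 ev2
  proof eventually_elim
    case (elim t)
    have uA: "u = 1 / A" "v = 1 / B" unfolding u_v_def A_B_def by simp_all
    have A0: "A \<noteq> 0" "B \<noteq> 0" "A \<noteq> B" using assms(2,3,4) unfolding A_B_def by simp_all
    have "v * inverse (1 - v * t) = 1 / (B - t)" using A0 elim unfolding uA by (simp add: field_simps)
    moreover have "u * inverse (1 - u * t) = 1 / (A - t)" using A0 elim unfolding uA by (simp add: field_simps)
    ultimately have "g t = K * ((1 / (B - t) - 1 / (A - t)) * inverse (1 - z * t))" unfolding g_def by simp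
    also have "1 / (B - t) - 1 / (A - t) = (A - B) / ((t - A) * (t - B))"
      using A0 elim by (simp add: field_simps)
    also have "K * ((A - B) / ((t - A) * (t - B)) * inverse (1 - z * t)) =
       1 / (of_real a * (t - A) * (t - B) * (1 - t * z))"
    proof -
      have gen: "1 / (x * y) * (y / D * inverse w) = 1 / (x * D * w)" if "y \<noteq> 0" for x y D w :: complex
        using that by (simp add: field_simps)
      have "1 - z * t = 1 - t * z" by (simp add: mult.commute)
      thus ?thesis unfolding K_def using gen[of "A - B" "of_real a" "(t - A) * (t - B)" "1 - z * t"] A0
        by (simp add: mult.assoc)
    qed
    also have "\<dots> = f t" unfolding f_def fac by simp
    finally show ?case by simp
  qed
  hence "f has_fps_expansion E" using gE has_fps_expansion_cong by blast
  hence "fps_expansion f 0 = E" by (rule fps_expansion_eqI)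
  hence "genP a b c m z = fps_nth E m" unfolding genP_def f_def by simp
  also have "\<dots> = K * (\<Sum>i\<le>m. (v^(Suc i) - u^(Suc i)) * z^(m-i))"
    unfolding E_def fps_mult_left_const_nth by (simp only: fps_mult_nth[where g = "Abs_fps (\<lambda>n. z^n)"] atLeast0AtMost fps_sub_nth fps_mult_left_const_nth fps_nth_Abs_fps power_Suc)
  finally show ?thesis unfolding K_def A_B_def u_v_def .
qed

lemma key:
  fixes u v :: complex assumes uv: "norm v < norm u"
  shows "\<exists>N::nat. \<forall>m>N. \<forall>z. norm z < (norm u + norm v)/2 \<longrightarrow>
           (\<Sum>i\<le>m. (v^Suc i - u^Suc i) * z^(m-i)) \<noteq> 0"
proof -
  define U V where "U = norm u" "V = norm v"
  define r where "r = (U+V)/2"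
  define q where "q = r/U"
  have V0: "V \<ge> 0" unfolding U_V_def by simp
  have U0: "U > 0" using uv V0 unfolding U_V_def by linarith
  have Vr: "V \<le> r" using uv V0 U0 unfolding r_def U_V_def by (simp add: field_simps)
  have rU: "r < U" using uv V0 U0 unfolding r_def U_V_def by (simp add: field_simps)
  have r0: "r > 0" using uv V0 U0 unfolding r_def U_V_def by (simp add: add_pos_nonneg)
  have q0: "q > 0" and q1: "q < 1" using r0 rU U0 unfolding q_def by auto
  have rq: "r = q * U" unfolding q_def using U0 by simp
  define \<delta> where "\<delta> = (1-q)/(1+q)"
  have d0: "\<delta> > 0" unfolding \<delta>_def using q0 q1 by simp
  have lim: "(\<lambda>m. (of_nat m + 1) * q^m) \<longlonglongrightarrow> 0"
    using tendsto_add[OF powser_times_n_limit_0[of q] LIMSEQ_power_zero[of q]] q0 q1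
    by (simp add: distrib_right)
  hence "eventually (\<lambda>m. (of_nat m + 1) * q^m < \<delta>) sequentially"
    using d0 order_tendstoD(2) by blast
  then obtain N where N: "\<And>m. m \<ge> N \<Longrightarrow> (of_nat m + 1) * q^m < \<delta>"
    by (auto simp: eventually_sequentially)
  show ?thesis
  proof (intro exI allI impI)
    fix m :: nat and z :: complex assume mN: "m > N" and zr': "norm z < (norm u + norm v)/2"
    have zr: "norm z \<le> r" using zr' unfolding r_def U_V_def by simp
    define S1 where "S1 = (\<Sum>i\<le>m. u^Suc i * z^(m-i))"
    define S2 where "S2 = (\<Sum>i\<le>m. v^Suc i * z^(m-i))"
    have split: "(\<Sum>i\<le>m. (v^Suc i - u^Suc i) * z^(m-i)) = S2 - S1"
      unfolding S1_def S2_def by (simp add: sum_subtractf algebra_simps)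
    have trm: "norm (v^Suc i * z^(m-i)) \<le> V * r^m" if "i \<le> m" for i
    proof -
      have "norm (v^Suc i * z^(m-i)) = V * V^i * norm z^(m-i)"
        unfolding U_V_def by (simp add: norm_mult norm_power)
      also have "\<dots> \<le> V * r^i * r^(m-i)"
        using V0 Vr zr by (intro mult_mono power_mono mult_left_mono) auto
      also have "\<dots> = V * r^m" using that by (simp add: mult.assoc power_add[symmetric])
      finally show ?thesis .
    qed
    have b2: "norm S2 \<le> (of_nat m + 1) * (V * r^m)"
    proof -
      have "norm S2 \<le> (\<Sum>i\<le>m. norm (v^Suc i * z^(m-i)))" unfolding S2_def by (rule norm_sum)
      also have "\<dots> \<le> (\<Sum>i\<le>m. V * r^m)" by (intro sum_mono trm) auto
      also have "\<dots> = (of_nat m + 1) * (V * r^m)" by simp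
      finally show ?thesis .
    qed
    have id: "(u - z) * S1 = u * (u^Suc m - z^Suc m)"
    proof -
      have "u^Suc m - z^Suc m = (u - z) * (\<Sum>i<Suc m. z^(Suc m - Suc i) * u^i)"
        by (rule power_diff_sumr2)
      hence "u * (u^Suc m - z^Suc m) = (u - z) * (\<Sum>i\<le>m. u * (z^(m - i) * u^i))"
        by (simp add: lessThan_Suc_atMost sum_distrib_left algebra_simps)
      thus ?thesis unfolding S1_def by (simp add: algebra_simps)
    qed
    have b1: "U * (U^Suc m - r^Suc m) \<le> norm S1 * (U + r)"
    proof -
      have "U^Suc m - r^Suc m \<le> norm (u^Suc m) - norm (z^Suc m)"
        using zr power_mono[OF zr, of "Suc m"] unfolding U_V_def by (simp only: norm_power) simp
      also have "\<dots> \<le> norm (u^Suc m - z^Suc m)" by (rule norm_triangle_ineq2)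
      finally have "U * (U^Suc m - r^Suc m) \<le> norm (u * (u^Suc m - z^Suc m))"
        using U0 unfolding U_V_def by (simp add: norm_mult)
      also have "\<dots> = norm (u - z) * norm S1" by (simp only: id[symmetric] norm_mult)
      also have "\<dots> \<le> (U + r) * norm S1"
      proof (rule mult_right_mono)
        show "norm (u - z) \<le> U + r" using norm_triangle_ineq4[of u z] zr unfolding U_V_def by simp
      qed simp
      finally show ?thesis by (simp add: mult.commute)
    qed
    have main: "(of_nat m + 1) * (V * r^m) * (U + r) < U * (U^Suc m - r^Suc m)"
    proof -
      define X where "X = (of_nat m + 1) * q^m * (1 + q)"
      have X0: "X \<ge> 0" unfolding X_def using q0 by simp
      have "X < 1 - q" using N[of m] mN q0 unfolding X_def \<delta>_def by (simp add: field_simps)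
      also have "1 - q \<le> 1 - q^Suc m" using q0 q1 by (simp add: power_le_one mult_left_le_one_le)
      finally have XY: "X < 1 - q^Suc m" .
      have "V * X \<le> U * X" using X0 uv unfolding U_V_def by (simp add: mult_right_mono)
      also have "\<dots> < U * (1 - q^Suc m)" using XY U0 by simp
      finally have "V * X * U^Suc m < U * (1 - q^Suc m) * U^Suc m" using U0 by (simp only: mult_strict_right_mono zero_less_power)
      moreover have e1: "(of_nat m + 1) * (V * r^m) * (U + r) = V * X * U^Suc m"
        unfolding rq X_def by (simp add: power_mult_distrib algebra_simps)
      moreover have e2: "U * (U^Suc m - r^Suc m) = U * (1 - q^Suc m) * U^Suc m"
        unfolding rq by (simp add: power_mult_distrib algebra_simps)
      ultimately show ?thesis by (simp only: e1 e2)
    qed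
    have "norm S2 * (U + r) < norm S1 * (U + r)"
      using b1 b2 main U0 r0 by (smt (verit) mult_right_mono)
    hence "norm S2 < norm S1" using U0 r0 by simp
    thus "(\<Sum>i\<le>m. (v^Suc i - u^Suc i) * z^(m-i)) \<noteq> 0" unfolding split by auto
  qed
qed

theorem mainTheorem11:
  fixes a b c \<alpha> \<beta> :: real
  assumes "a \<noteq> 0" and "b \<noteq> 0" and "c \<noteq> 0"
    and "b\<^sup>2 - 4 * a * c > 0"
    and "a * \<alpha>\<^sup>2 + b * \<alpha> + c = 0" and "a * \<beta>\<^sup>2 + b * \<beta> + c = 0"
    and "\<alpha> \<noteq> \<beta>" and "\<bar>\<alpha>\<bar> \<le> \<bar>\<beta>\<bar>"
  shows "\<exists>N::nat. \<forall>m>N.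
           {z. genP a b c m z = 0} \<inter> ball 0 ((1 / \<bar>\<alpha>\<bar> + 1 / \<bar>\<beta>\<bar>) / 2) = {}"
proof -
  have a0: "\<alpha> \<noteq> 0" using assms(3,5) by auto
  have b0: "\<beta> \<noteq> 0" using assms(3,6) by auto
  have lt: "\<bar>\<alpha>\<bar> < \<bar>\<beta>\<bar>"
  proof (rule ccontr)
    assume "\<not> \<bar>\<alpha>\<bar> < \<bar>\<beta>\<bar>"
    hence "\<bar>\<alpha>\<bar> = \<bar>\<beta>\<bar>" using assms(8) by simp
    hence "\<beta> = - \<alpha>" using assms(7) by (auto simp: abs_if split: if_splits)
    have "(a * \<alpha>\<^sup>2 + b * \<alpha> + c) - (a * \<beta>\<^sup>2 + b * \<beta> + c) = 0" using assms(5,6) by simp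
    hence "2 * b * \<alpha> = 0" using \<open>\<beta> = - \<alpha>\<close> by (simp add: power2_eq_square algebra_simps)
    thus False using assms(2) a0 by simp
  qed
  define u v :: complex where "u = of_real (1/\<alpha>)" "v = of_real (1/\<beta>)"
  have nu: "norm u = 1 / \<bar>\<alpha>\<bar>" "norm v = 1 / \<bar>\<beta>\<bar>" unfolding u_v_def by (simp_all add: norm_divide)
  have "norm v < norm u" unfolding nu using lt a0 by (simp add: frac_less2)
  then obtain N where N: "\<And>m z. m > N \<Longrightarrow> norm z < (norm u + norm v)/2 \<Longrightarrow>
           (\<Sum>i\<le>m. (v^Suc i - u^Suc i) * z^(m-i)) \<noteq> 0"
    using key by blast
  have K0: "1 / (complex_of_real a * (complex_of_real \<alpha> - complex_of_real \<beta>)) \<noteq> 0"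
    using assms(1,7) by simp
  show ?thesis
  proof (intro exI allI impI)
    fix m assume mN: "m > N"
    show "{z. genP a b c m z = 0} \<inter> ball 0 ((1 / \<bar>\<alpha>\<bar> + 1 / \<bar>\<beta>\<bar>) / 2) = {}"
    proof (rule ccontr)
      assume "\<not> ?thesis"
      then obtain z where z0: "genP a b c m z = 0" and zb: "norm z < (norm u + norm v)/2"
        unfolding nu by (auto simp: dist_norm)
      have "genP a b c m z = 1 / (complex_of_real a * (complex_of_real \<alpha> - complex_of_real \<beta>)) *
         (\<Sum>i\<le>m. (v^Suc i - u^Suc i) * z^(m-i))"
        unfolding u_v_def by (rule genP_formula) (use assms a0 b0 in auto)
      with K0 N[OF mN zb] z0 show False by simp
    qed
  qed
qed

end
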